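(* Let $T\in(0,\infty)$, and let $\mu_T$, $\mu_T^{(N)}$ ($N\in\mathbb{N}$) and $\nu_k^{\Delta t}$ ($k\in\mathbb{N}_0$, $\Delta t\in(0,1)$) be the probability distributions on $H=L^2(0,1)$ defined in the context. Then \[ \limsup_{N\to\infty}\ \sup_{\phi\in\mathcal{C}^0(H,\mathbb{R}),\ \|\phi\|_0\le 1}\Big|\int_H\phi\,d\mu_T-\int_H\phi\,d\mu_T^{(N)}\Big|>0, \] and \[ \limsup_{\Delta t\to 0}\ \sup_{\phi\in\mathcal{C}^0(H,\mathbb{R}),\ \|\phi\|_0\le 1}\Big|\int_H\phi\,d\mu_T-\int_H\phi\,d\nu_{\lfloor T/\Delta t\rfloor}^{\Delta t}\Big|>0. \]
   Context: Let $H=L^2(0,1)$ with inner product $\langle\cdot,\cdot\rangle$ and norm $|\cdot|$. For $n\in\mathbb{N}=\{1,2,\ldots\}$ let $\lambda_n=\pi^2n^2$ and $e_n=\sqrt2\sin(n\pi\,\cdot)$, a complete orthonormal system of $H$. Let $A$ be the self-adjoint operator $Ax=-\sum_{n}\lambda_n\langle x,e_n\rangle e_n$ on $D(A)=\{x\in H:\sum_n\lambda_n^2\langle x,e_n\rangle^2<\infty\}$ (Dirichlet Laplacian), generating the semigroup $e^{tA}x=\sum_n e^{-\lambda_nt}\langle x,e_n\rangle e_n$. Let $(\beta_n)_{n\in\mathbb{N}}$ be independent standard real Wiener processes on a probability space and $W(t)=\sum_n\beta_n(t)e_n$ the cylindrical Wiener process. Let $X(t)=\int_0^te^{(t-s)A}dW(s)=\sum_n\big(\int_0^te^{-\lambda_n(t-s)}d\beta_n(s)\big)e_n$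 be the mild solution of $dX=AX\,dt+dW$, $X(0)=0$, and let $\mu_t$ denote the law of $X(t)$ (a centered Gaussian measure on $H$ with covariance $Q_te_n=\frac{1}{2\lambda_n}(1-e^{-2\lambda_nt})e_n$). Spectral Galerkin discretization: for $N\in\mathbb{N}$, $P_N$ is the orthogonal projection onto $\mathrm{Span}(e_1,\ldots,e_N)$, $X^{(N)}(t)=P_NX(t)$ (the solution of $dX^{(N)}=AX^{(N)}dt+P_NdW$, $X^{(N)}(0)=0$), and $\mu_t^{(N)}$ is the law of $X^{(N)}(t)$. Linear implicit Euler scheme: for $\Delta t\in(0,1)$, let $S_{\Delta t}=(I-\Delta tA)^{-1}$, $X_0^{\Delta t}=0$, $X_{k+1}^{\Delta t}=S_{\Delta t}X_k^{\Delta t}+S_{\Delta t}\big(W((k+1)\Delta t)-W(k\Delta t)\big)$ for $k\in\mathbb{N}_0$ (so $X_k^{\Delta t}=\sum_{\ell=0}^{k-1}S_{\Delta t}^{k-\ell}(W((\ell+1)\Delta t)-W(\ell\Delta t))$), and $\nu_k^{\Delta t}$ is the law of $X_k^{\Delta t}$ (centered Gaussian with covariance $\Delta t\sum_{\ell=0}^{k-1}S_{\Delta t}^{2(k-\ell)}$). $\mathcal{C}^0(H,\mathbb{R})$ denotes the bounded continuous functions $H\to\mathbb{R}$, with $\|\phi\|_0=\sup_{x\in H}|\phi(x)|$. *)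

theory Defs
  imports "HOL-Probability.Probability"
begin

text \<open>The Hilbert space H = L2(0,1) is represented through its coordinates in the
  orthonormal basis e_n = sqrt 2 sin(n pi .): coordinate i (i = 0,1,2,...) of a point
  corresponds to the coefficient w.r.t. e_(i+1). This is an isometric isomorphism of H
  onto the sequence space l2.\<close>

definition Hsp :: "(nat \<Rightarrow> real) set" where
  "Hsp = {x. summable (\<lambda>i. (x i)\<^sup>2)}"

definition Hdist :: "(nat \<Rightarrow> real) \<Rightarrow> (nat \<Rightarrow> real) \<Rightarrow> real" where
  "Hdist x y = sqrt (\<Sum>i. (x i - y i)\<^sup>2)"

definition H_continuous :: "((nat \<Rightarrow> real) \<Rightarrow> real) \<Rightarrow> bool" where
  "H_continuous \<phi> \<longleftrightarrow>
     (\<forall>x\<in>Hsp. \<forall>e>0. \<exists>d>0. \<forall>y\<in>Hsp. Hdist x y < d \<longrightarrow> \<bar>\<phi> y - \<phi> x\<bar> < e)"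

text \<open>Eigenvalue of -A belonging to coordinate i, i.e. to e_(i+1).\<close>
definition eig :: "nat \<Rightarrow> real" where
  "eig i = pi\<^sup>2 * (real (Suc i))\<^sup>2"

definition gauss1 :: "real \<Rightarrow> real measure" where
  "gauss1 v = (if v = 0 then return borel 0 else density lborel (normal_density 0 (sqrt v)))"

text \<open>Centered Gaussian measure on H with diagonal covariance Q e_(i+1) = q i e_(i+1):
  the coordinates are independent centered Gaussians with variances q i.\<close>
definition gaussH :: "(nat \<Rightarrow> real) \<Rightarrow> (nat \<Rightarrow> real) measure" where
  "gaussH q = restrict_space (\<Pi>\<^sub>M i\<in>UNIV. gauss1 (q i)) Hsp"

text \<open>mu_t : law of X(t); covariance Q_t.\<close>
definition mu :: "real \<Rightarrow> (nat \<Rightarrow> real) measure" where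
  "mu t = gaussH (\<lambda>i. (1 - exp (- 2 * eig i * t)) / (2 * eig i))"

text \<open>mu_t^(N) : law of P_N X(t) (coordinates e_1..e_N kept).\<close>
definition muN :: "nat \<Rightarrow> real \<Rightarrow> (nat \<Rightarrow> real) measure" where
  "muN N t = gaussH (\<lambda>i. if i < N then (1 - exp (- 2 * eig i * t)) / (2 * eig i) else 0)"

text \<open>nu_k^dt : law of the linear implicit Euler iterate; covariance
  dt * sum_(l=0)^(k-1) S_dt^(2(k-l)), with S_dt e_(i+1) = (1 + dt eig i)^-1 e_(i+1).\<close>
definition nu :: "real \<Rightarrow> nat \<Rightarrow> (nat \<Rightarrow> real) measure" where
  "nu dt k = gaussH (\<lambda>i. dt * (\<Sum>l<k. (1 / (1 + dt * eig i)) ^ (2 * (k - l))))"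

definition C0dist :: "(nat \<Rightarrow> real) measure \<Rightarrow> (nat \<Rightarrow> real) measure \<Rightarrow> real" where
  "C0dist P Q = Sup {\<bar>(\<integral>x. \<phi> x \<partial>P) - (\<integral>x. \<phi> x \<partial>Q)\<bar> | \<phi>.
      H_continuous \<phi> \<and> (\<forall>x\<in>Hsp. \<bar>\<phi> x\<bar> \<le> 1)}"

end

theory Submission
  imports Defs
begin

lemma cos_gauss_pos:
  assumes "\<sigma> > 0"
  shows "(\<integral>y. cos (t * y) \<partial>density lborel (normal_density 0 \<sigma>)) = exp (- (t * \<sigma>)\<^sup>2 / 2)"
proof -
  interpret S: prob_space std_normal_distribution
    using real_dist_normal_dist by (simp add: real_distribution_def)
  have d0: "distributed std_normal_distribution lborel (\<lambda>x. x) (normal_density 0 1)"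
    unfolding distributed_def by (simp add: distr_id2 cong: distr_cong)
  have "distributed std_normal_distribution lborel (\<lambda>x. 0 + \<sigma> * x) (normal_density (0 + \<sigma> * 0) (\<bar>\<sigma>\<bar> * 1))"
    by (rule S.normal_density_affine[OF d0]) (use assms in auto)
  then have eq: "density lborel (normal_density 0 \<sigma>) = distr std_normal_distribution lborel (\<lambda>x. \<sigma> * x)"
    using assms by (simp add: distributed_def)
  have "(\<integral>y. cos (t * y) \<partial>density lborel (normal_density 0 \<sigma>)) = (\<integral>x. cos (t * (\<sigma> * x)) \<partial>std_normal_distribution)"
    unfolding eq by (subst integral_distr) auto
  also have "\<dots> = (\<integral>x. Re (iexp ((t*\<sigma>) * x)) \<partial>std_normal_distribution)"
    by (simp add: cos_exp_eq Re_exp mult.assoc)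
  also have "\<dots> = Re (char std_normal_distribution (t * \<sigma>))"
    unfolding char_def by (rule integral_Re) (rule S.integrable_iexp, auto)
  also have "\<dots> = exp (- (t * \<sigma>)\<^sup>2 / 2)"
    by (simp add: char_std_normal_distribution)
  finally show ?thesis .
qed

lemma cos_gauss1:
  assumes "v \<ge> 0"
  shows "(\<integral>y. cos (t * y) \<partial>gauss1 v) = exp (- t\<^sup>2 * v / 2)"
proof (cases "v = 0")
  case True then show ?thesis by (simp add: gauss1_def integral_return)
next
  case False
  then have "sqrt v > 0" using assms by simp
  from cos_gauss_pos[OF this, of t] show ?thesis using False assms
    by (simp add: gauss1_def power_mult_distrib)
qed

lemma prob_gauss1: "v \<ge> 0 \<Longrightarrow> prob_space (gauss1 v)"
  by (auto simp: gauss1_def prob_space_return intro: prob_space_normal_density)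

lemma sets_gauss1[simp, measurable_cong]: "sets (gauss1 v) = sets borel"
  by (simp add: gauss1_def)

lemma space_gauss1[simp]: "space (gauss1 v) = UNIV"
  by (simp add: gauss1_def)

lemma sq_gauss1: assumes "v \<ge> 0" shows "(\<integral>\<^sup>+ y. ennreal (y\<^sup>2) \<partial>gauss1 v) = ennreal v"
proof (cases "v = 0")
  case True then show ?thesis by (simp add: gauss1_def nn_integral_return)
next
  case False
  then have s: "sqrt v > 0" using assms by simp
  have hb: "has_bochner_integral lborel (\<lambda>x. normal_density 0 (sqrt v) x * (x - 0) ^ (2 * 1))
   (fact (2 * 1) / ((2 / (sqrt v)\<^sup>2) ^ 1 * fact 1))" by (rule normal_moment_even[OF s])
  have "(\<integral>\<^sup>+ y. ennreal (y\<^sup>2) \<partial>gauss1 v) = (\<integral>\<^sup>+ y. ennreal (normal_density 0 (sqrt v) y * y\<^sup>2) \<partial>lborel)"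
    using False by (simp add: gauss1_def nn_integral_density ennreal_mult')
  also have "\<dots> = ennreal (\<integral> y. normal_density 0 (sqrt v) y * y\<^sup>2 \<partial>lborel)"
    using hb by (intro nn_integral_eq_integral) (auto simp: has_bochner_integral_iff power2_eq_square)
  also have "\<dots> = ennreal v"
    using hb assms by (simp add: has_bochner_integral_iff power2_eq_square)
  finally show ?thesis .
qed

lemma gaussH_facts:
  assumes q: "\<And>i. q i \<ge> 0" "summable q"
  shows "Hsp \<in> sets (PiM UNIV (\<lambda>i. gauss1 (q i)))"
    "emeasure (PiM UNIV (\<lambda>i. gauss1 (q i))) Hsp = 1"
proof -
  let ?M = "PiM UNIV (\<lambda>i. gauss1 (q i))"
  have P: "prob_space ?M" by (rule prob_space_PiM) (use q prob_gauss1 in auto)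
  define F where "F x = (\<Sum>i. ennreal ((x i)\<^sup>2))" for x :: "nat \<Rightarrow> real"
  have Fm: "F \<in> borel_measurable ?M" unfolding F_def by measurable
  have spM: "space ?M = UNIV" by (simp add: space_PiM)
  have HF: "Hsp = {x \<in> space ?M. F x \<noteq> \<top>}"
  proof (intro set_eqI iffI)
    fix x assume "x \<in> Hsp"
    then have "summable (\<lambda>i. (x i)\<^sup>2)" unfolding Hsp_def by simp
    then have "F x \<noteq> \<top>" unfolding F_def by (rule ennreal_suminf_neq_top) simp
    then show "x \<in> {x \<in> space ?M. F x \<noteq> \<top>}" unfolding spM by simp
  next
    fix x assume "x \<in> {x \<in> space ?M. F x \<noteq> \<top>}"
    then have "F x \<noteq> \<top>" by simp
    then have "summable (\<lambda>i. (x i)\<^sup>2)" unfolding F_def by (intro summable_suminf_not_top) simp_all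
    then show "x \<in> Hsp" unfolding Hsp_def by simp
  qed
  show S: "Hsp \<in> sets ?M" unfolding HF using Fm by measurable
  have "(\<integral>\<^sup>+ x. F x \<partial>?M) = (\<Sum>i. \<integral>\<^sup>+ x. ennreal ((x i)\<^sup>2) \<partial>?M)"
    unfolding F_def by (rule nn_integral_suminf) measurable
  also have "\<dots> = (\<Sum>i. ennreal (q i))"
  proof (rule suminf_cong)
    fix i
    have "(\<integral>\<^sup>+ x. ennreal ((x i)\<^sup>2) \<partial>?M) = (\<integral>\<^sup>+ y. ennreal (y\<^sup>2) \<partial>distr ?M (gauss1 (q i)) (\<lambda>x. x i))"
      by (subst nn_integral_distr) auto
    also have "\<dots> = (\<integral>\<^sup>+ y. ennreal (y\<^sup>2) \<partial>gauss1 (q i))"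
      by (subst distr_PiM_component) (use q prob_gauss1 in auto)
    finally show "(\<integral>\<^sup>+ x. ennreal ((x i)\<^sup>2) \<partial>?M) = ennreal (q i)" using sq_gauss1 q by simp
  qed
  finally have "(\<integral>\<^sup>+ x. F x \<partial>?M) \<noteq> \<top>" using q by (simp add: ennreal_suminf_neq_top)
  then have "AE x in ?M. F x \<noteq> \<top>" using nn_integral_PInf_AE[OF Fm] by simp
  then have "AE x in ?M. x \<in> Hsp" unfolding HF by eventually_elim (auto simp: spM)
  then show "emeasure ?M Hsp = 1" using prob_space.emeasure_eq_1_AE[OF P S] by simp
qed

lemma gaussH_space: "space (gaussH q) = Hsp"
  by (simp add: gaussH_def space_restrict_space space_PiM)

lemma gaussH_prob:
  assumes q: "\<And>i. q i \<ge> 0" "summable q"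
  shows "prob_space (gaussH q)"
  unfolding gaussH_def by (rule prob_space_restrict_space) (use gaussH_facts[OF q] in auto)

lemma gaussH_integral:
  fixes f :: "real \<Rightarrow> real"
  assumes q: "\<And>i. q i \<ge> 0" "summable q" and f[measurable]: "f \<in> borel_measurable borel"
  shows "(\<integral>x. f (x i) \<partial>gaussH q) = (\<integral>y. f y \<partial>gauss1 (q i))"
proof -
  let ?M = "PiM UNIV (\<lambda>i. gauss1 (q i))"
  have P: "prob_space ?M" by (rule prob_space_PiM) (use q prob_gauss1 in auto)
  note F = gaussH_facts[OF q]
  have sp: "Hsp \<inter> space ?M = Hsp" by (simp add: space_PiM)
  have AE: "AE x in ?M. x \<in> Hsp"
    using prob_space.AE_in_set_eq_1[OF P F(1)] F(2) by (simp add: finite_measure.emeasure_eq_measure[OF prob_space.finite_measure[OF P]])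
  have "(\<integral>x. f (x i) \<partial>gaussH q) = (\<integral>x. indicator Hsp x *\<^sub>R f (x i) \<partial>?M)"
    unfolding gaussH_def using integral_restrict_space[of Hsp ?M "\<lambda>x. f (x i)"] sp F(1) by simp
  also have "\<dots> = (\<integral>x. f (x i) \<partial>?M)"
  proof -
    have [measurable]: "Hsp \<in> sets ?M" by (rule F(1))
    have m1: "(\<lambda>x. indicator Hsp x *\<^sub>R f (x i)) \<in> borel_measurable ?M" by measurable
    have m2: "(\<lambda>x. f (x i)) \<in> borel_measurable ?M" by measurable
    have "AE x in ?M. indicator Hsp x *\<^sub>R f (x i) = f (x i)" using AE by eventually_elim simp
    then show ?thesis by (rule integral_cong_AE[OF m1 m2])
  qed
  also have "\<dots> = (\<integral>y. f y \<partial>distr ?M (gauss1 (q i)) (\<lambda>x. x i))"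
  proof -
    have c: "(\<lambda>x. x i) \<in> measurable ?M (gauss1 (q i))" by (rule measurable_component_singleton) simp
    have g: "f \<in> borel_measurable (gauss1 (q i))" using measurable_cong_sets[OF sets_gauss1[of "q i"] refl, of borel] f by simp
    show ?thesis by (rule integral_distr[OF c g, symmetric])
  qed
  also have "\<dots> = (\<integral>y. f y \<partial>gauss1 (q i))"
    by (subst distr_PiM_component) (use q prob_gauss1 in auto)
  finally show ?thesis .
qed

lemma gaussH_bound:
  fixes \<phi> :: "(nat \<Rightarrow> real) \<Rightarrow> real"
  assumes q: "\<And>i. q i \<ge> 0" "summable q" and b: "\<forall>x\<in>Hsp. \<bar>\<phi> x\<bar> \<le> 1"
  shows "\<bar>\<integral>x. \<phi> x \<partial>gaussH q\<bar> \<le> 1"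
proof (cases "integrable (gaussH q) \<phi>")
  case True
  interpret P: prob_space "gaussH q" by (rule gaussH_prob[OF q])
  have "\<bar>\<integral>x. \<phi> x \<partial>gaussH q\<bar> \<le> (\<integral>x. \<bar>\<phi> x\<bar> \<partial>gaussH q)" using integral_abs_bound[of "gaussH q" \<phi>] by simp
  also have "\<dots> \<le> (\<integral>x. 1 \<partial>gaussH q)"
    by (rule integral_mono) (use True b in \<open>auto simp: gaussH_space\<close>)
  also have "\<dots> = 1" by (simp add: P.prob_space)
  finally show ?thesis .
next
  case False then show ?thesis by (simp add: not_integrable_integral_eq)
qed

lemma C0dist_ge:
  assumes q: "\<And>i. q i \<ge> 0" "summable q" and r: "\<And>i. r i \<ge> 0" "summable r"
    and c: "H_continuous \<phi>" and b: "\<forall>x\<in>Hsp. \<bar>\<phi> x\<bar> \<le> 1"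
  shows "\<bar>(\<integral>x. \<phi> x \<partial>gaussH q) - (\<integral>x. \<phi> x \<partial>gaussH r)\<bar> \<le> C0dist (gaussH q) (gaussH r)"
  unfolding C0dist_def
proof (rule cSup_upper)
  show "\<bar>(\<integral>x. \<phi> x \<partial>gaussH q) - (\<integral>x. \<phi> x \<partial>gaussH r)\<bar> \<in> {\<bar>(\<integral>x. \<phi> x \<partial>gaussH q) - (\<integral>x. \<phi> x \<partial>gaussH r)\<bar> | \<phi>.
      H_continuous \<phi> \<and> (\<forall>x\<in>Hsp. \<bar>\<phi> x\<bar> \<le> 1)}" using c b by blast
  show "bdd_above {\<bar>(\<integral>x. \<phi> x \<partial>gaussH q) - (\<integral>x. \<phi> x \<partial>gaussH r)\<bar> | \<phi>.
      H_continuous \<phi> \<and> (\<forall>x\<in>Hsp. \<bar>\<phi> x\<bar> \<le> 1)}"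
  proof (rule bdd_aboveI[where M=2], safe)
    fix \<psi> :: "(nat \<Rightarrow> real) \<Rightarrow> real" assume "\<forall>x\<in>Hsp. \<bar>\<psi> x\<bar> \<le> 1"
    then have "\<bar>\<integral>x. \<psi> x \<partial>gaussH q\<bar> \<le> 1" "\<bar>\<integral>x. \<psi> x \<partial>gaussH r\<bar> \<le> 1"
      using gaussH_bound q r by auto
    then show "\<bar>(\<integral>x. \<psi> x \<partial>gaussH q) - (\<integral>x. \<psi> x \<partial>gaussH r)\<bar> \<le> 2" by linarith
  qed
qed

lemma abs_cos_diff: fixes a b :: real shows "\<bar>cos a - cos b\<bar> \<le> \<bar>a - b\<bar>"
proof -
  have "\<bar>cos a - cos b\<bar> = 2 * \<bar>sin ((a + b) / 2)\<bar> * \<bar>sin ((b - a) / 2)\<bar>"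
    by (simp add: cos_diff_cos abs_mult)
  also have "\<dots> \<le> 2 * 1 * \<bar>(b - a) / 2\<bar>"
    by (intro mult_mono abs_sin_x_le_abs_x) auto
  finally show ?thesis by simp
qed

lemma coord_le_Hdist:
  assumes "x \<in> Hsp" "y \<in> Hsp"
  shows "\<bar>x i - y i\<bar> \<le> Hdist x y"
proof -
  have s1: "summable (\<lambda>j. (x j)\<^sup>2)" "summable (\<lambda>j. (y j)\<^sup>2)" using assms by (auto simp: Hsp_def)
  have sg: "summable (\<lambda>j. 2 * (x j)\<^sup>2 + 2 * (y j)\<^sup>2)"
    by (intro summable_add summable_mult s1)
  have le: "(x j - y j)\<^sup>2 \<le> 2 * (x j)\<^sup>2 + 2 * (y j)\<^sup>2" for j
  proof -
    have "(x j - y j)\<^sup>2 = 2 * (x j)\<^sup>2 + 2 * (y j)\<^sup>2 - (x j + y j)\<^sup>2"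
      by (simp add: power2_eq_square algebra_simps)
    then show ?thesis by simp
  qed
  have s: "summable (\<lambda>j. (x j - y j)\<^sup>2)"
    by (rule summable_comparison_test'[OF sg, where N=0]) (simp add: le)
  have "(x i - y i)\<^sup>2 \<le> (\<Sum>j. (x j - y j)\<^sup>2)"
    using sum_le_suminf[OF s, of "{i}"] by simp
  then have "sqrt ((x i - y i)\<^sup>2) \<le> Hdist x y" unfolding Hdist_def by (rule real_sqrt_le_mono)
  then show ?thesis by simp
qed

lemma cos_coord_cont: "H_continuous (\<lambda>x. cos (t * x i))"
  unfolding H_continuous_def
proof (intro ballI allI impI)
  fix x e assume x: "x \<in> Hsp" and e: "(e::real) > 0"
  show "\<exists>d>0. \<forall>y\<in>Hsp. Hdist x y < d \<longrightarrow> \<bar>cos (t * y i) - cos (t * x i)\<bar> < e"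
  proof (intro exI[of _ "e / (\<bar>t\<bar> + 1)"] conjI ballI impI)
    show "e / (\<bar>t\<bar> + 1) > 0" using e by simp
    fix y assume y: "y \<in> Hsp" and d: "Hdist x y < e / (\<bar>t\<bar> + 1)"
    have "\<bar>cos (t * y i) - cos (t * x i)\<bar> \<le> \<bar>t\<bar> * \<bar>x i - y i\<bar>"
      using abs_cos_diff[of "t * y i" "t * x i"] by (simp add: abs_mult right_diff_distrib[symmetric] abs_minus_commute)
    also have "\<dots> \<le> \<bar>t\<bar> * Hdist x y" by (intro mult_left_mono coord_le_Hdist x y) auto
    also have "\<dots> \<le> (\<bar>t\<bar> + 1) * Hdist x y"
      using coord_le_Hdist[OF x y, of 0] by (intro mult_right_mono) auto
    also have "\<dots> < (\<bar>t\<bar> + 1) * (e / (\<bar>t\<bar> + 1))" by (intro mult_strict_left_mono d) auto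
    also have "\<dots> = e" by simp
    finally show "\<bar>cos (t * y i) - cos (t * x i)\<bar> < e" .
  qed
qed

lemma key:
  assumes q: "\<And>i. q i \<ge> 0" "summable q" and r: "\<And>i. r i \<ge> 0" "summable r"
    and qi: "q i > 0" and ri: "r i \<le> q i / 16"
  shows "1/2 \<le> C0dist (gaussH q) (gaussH r)"
proof -
  define t where "t = sqrt (2 * ln 4 / q i)"
  have t2: "t\<^sup>2 = 2 * ln 4 / q i" unfolding t_def using qi by simp
  have Iq: "(\<integral>x. cos (t * x i) \<partial>gaussH q) = 1/4"
    using gaussH_integral[OF q, of "\<lambda>y. cos (t * y)" i] cos_gauss1[OF q(1)[of i], of t] t2 qi
    by (simp add: exp_minus)
  have Ir: "(\<integral>x. cos (t * x i) \<partial>gaussH r) = exp (- (ln 4 * (r i / q i)))"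
    using gaussH_integral[OF r, of "\<lambda>y. cos (t * y)" i] cos_gauss1[OF r(1)[of i], of t] t2 qi
    by (simp add: field_simps)
  have l4: "ln (4::real) \<le> 2"
  proof -
    have "ln (4::real) = ln (2 * 2)" by simp
    also have "\<dots> = 2 * ln 2" by (subst ln_mult) auto
    finally show ?thesis using ln_2_less_1 by simp
  qed
  have rq: "r i / q i \<le> 1/16" using ri qi r(1)[of i] by (simp add: divide_simps)
  have "1 - ln 4 * (r i / q i) \<le> exp (- (ln 4 * (r i / q i)))"
    using exp_ge_add_one_self[of "- (ln 4 * (r i / q i))"] by simp
  moreover have "ln 4 * (r i / q i) \<le> 2 * (1/16)"
    using l4 rq r(1)[of i] qi by (intro mult_mono) auto
  ultimately have "7/8 \<le> exp (- (ln 4 * (r i / q i)))" by simp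
  then have "1/2 \<le> \<bar>(\<integral>x. cos (t * x i) \<partial>gaussH q) - (\<integral>x. cos (t * x i) \<partial>gaussH r)\<bar>"
    unfolding Iq Ir by simp
  also have "\<dots> \<le> C0dist (gaussH q) (gaussH r)"
    by (rule C0dist_ge[OF q r cos_coord_cont]) simp
  finally show ?thesis .
qed

lemma eig_pos: "eig i > 0" by (simp add: eig_def)
lemma eig_ge_pi: "eig i \<ge> pi\<^sup>2" by (simp add: eig_def)


lemma eig_ge2: "eig i \<ge> (real (Suc i))\<^sup>2"
proof -
  have "1 \<le> pi" using pi_gt3 by simp
  then have pp: "1 * 1 \<le> pi * pi" by (intro mult_mono) auto
  show ?thesis using mult_right_mono[OF pp, of "(real (Suc i))\<^sup>2"]
    by (simp add: eig_def power2_eq_square)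
qed

definition w :: "nat \<Rightarrow> real" where "w i = inverse ((real (Suc i))\<^sup>2)"

lemma summable_w: "summable w"
proof -
  have "summable (\<lambda>n. inverse (real n ^ 2))" by (rule inverse_power_summable) simp
  then have "summable (\<lambda>n. inverse (real (Suc n) ^ 2))" by (subst summable_Suc_iff)
  then show ?thesis unfolding w_def[abs_def] by simp
qed

lemma summable_by_w:
  assumes "\<And>i. 0 \<le> q i" "\<And>i. q i \<le> C * w i"
  shows "summable q"
  by (rule summable_comparison_test'[OF summable_mult[OF summable_w, of C], where N=0]) (use assms in auto)

lemma inv_eig_le_w: "1 / eig i \<le> w i"
proof -
  have "(real (Suc i))\<^sup>2 > 0" by simp
  then have "1 / eig i \<le> 1 / (real (Suc i))\<^sup>2"
    using eig_ge2[of i] eig_pos[of i] by (intro divide_left_mono) auto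
  then show ?thesis unfolding w_def by (simp add: inverse_eq_divide)
qed

definition acoef :: "real \<Rightarrow> nat \<Rightarrow> real" where
  "acoef T i = (1 - exp (- 2 * eig i * T)) / (2 * eig i)"

lemma acoef_pos: "T > 0 \<Longrightarrow> acoef T i > 0"
  using eig_pos[of i] by (simp add: acoef_def)

lemma acoef_le: "acoef T i \<le> 1 / (2 * eig i)"
  using eig_pos[of i] by (simp add: acoef_def divide_right_mono)

lemma acoef_summable: "T > 0 \<Longrightarrow> summable (acoef T)"
proof (rule summable_by_w[where C=1])
  fix i assume "T > 0"
  then show "0 \<le> acoef T i" using acoef_pos[of T i] by simp
  have "acoef T i \<le> 1 / (2 * eig i)" by (rule acoef_le)
  also have "\<dots> \<le> 1 / eig i" using eig_pos[of i] by (simp add: divide_simps)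
  also have "\<dots> \<le> w i" by (rule inv_eig_le_w)
  finally show "acoef T i \<le> 1 * w i" by simp
qed

lemma part1:
  assumes T: "T > 0"
  shows "1/2 \<le> C0dist (mu T) (muN N T)"
proof -
  have q: "\<And>i. acoef T i \<ge> 0" "summable (acoef T)"
    using acoef_pos[OF T] acoef_summable[OF T] by (auto intro: less_imp_le)
  define r where "r i = (if i < N then acoef T i else 0)" for i
  have r: "\<And>i. r i \<ge> 0" "summable r"
    using q unfolding r_def
    by (auto intro!: summable_comparison_test'[OF q(2), where N=0])
  have "1/2 \<le> C0dist (gaussH (acoef T)) (gaussH r)"
    by (rule key[OF q r, of N]) (use acoef_pos[OF T, of N] in \<open>auto simp: r_def\<close>)
  moreover have "mu T = gaussH (acoef T)"
    by (simp add: mu_def acoef_def[abs_def])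
  moreover have "muN N T = gaussH r"
    unfolding muN_def by (rule arg_cong[where f=gaussH]) (simp add: fun_eq_iff r_def acoef_def)
  ultimately show ?thesis by simp
qed

definition bcoef :: "real \<Rightarrow> nat \<Rightarrow> nat \<Rightarrow> real" where
  "bcoef dt k i = dt * (\<Sum>l<k. (1 / (1 + dt * eig i)) ^ (2 * (k - l)))"

lemma bcoef_nonneg: "dt > 0 \<Longrightarrow> bcoef dt k i \<ge> 0"
  using eig_pos[of i] by (auto simp: bcoef_def intro!: sum_nonneg mult_nonneg_nonneg)

lemma bcoef_le:
  assumes dt: "dt > 0" and k: "dt * real k \<le> T"
  shows "bcoef dt k i \<le> T / (dt\<^sup>2 * (eig i)\<^sup>2)"
proof -
  define s where "s = 1 / (1 + dt * eig i)"
  have e: "eig i > 0" by (rule eig_pos)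
  have de: "0 < dt * eig i" using dt e by simp
  have s0: "0 \<le> s" "s \<le> 1" using de by (auto simp: s_def divide_le_eq_1)
  have "0 \<le> dt * real k" using dt by simp
  then have T0: "T \<ge> 0" using k by linarith
  have pp: "0 < (1 + dt * eig i) * (dt * eig i)" by (rule mult_pos_pos) (use de in auto)
  have ss: "s \<le> 1 / (dt * eig i)" unfolding s_def using pp by (intro divide_left_mono) auto
  then have "s\<^sup>2 \<le> (1 / (dt * eig i))\<^sup>2" using s0 by (intro power_mono) auto
  then have sT: "T * s\<^sup>2 \<le> T * (1 / (dt * eig i))\<^sup>2" using T0 by (intro mult_left_mono) auto
  have "(\<Sum>l<k. s ^ (2 * (k - l))) \<le> (\<Sum>l<k. s ^ 2)"
    by (intro sum_mono power_decreasing s0) auto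
  also have "\<dots> = real k * s\<^sup>2" by simp
  finally have "bcoef dt k i \<le> dt * (real k * s\<^sup>2)"
    unfolding bcoef_def s_def[symmetric] using dt by (intro mult_left_mono) auto
  also have "\<dots> = (dt * real k) * s\<^sup>2" by simp
  also have "\<dots> \<le> T * s\<^sup>2" by (intro mult_right_mono k) simp
  also have "\<dots> \<le> T * (1 / (dt * eig i))\<^sup>2" by (rule sT)
  also have "\<dots> = T / (dt\<^sup>2 * (eig i)\<^sup>2)" by (simp add: power_divide power_mult_distrib)
  finally show ?thesis .
qed

lemma bcoef_summable:
  assumes dt: "dt > 0" and k: "dt * real k \<le> T"
  shows "summable (bcoef dt k)"
proof (rule summable_by_w[where C="T / dt\<^sup>2"])
  fix i
  show "0 \<le> bcoef dt k i" using bcoef_nonneg[OF dt] .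
  have "1 \<le> (real (Suc i))\<^sup>2" by (rule one_le_power) simp
  then have e: "eig i \<ge> 1" using eig_ge2[of i] by linarith
  have "0 \<le> dt * real k" using dt by simp
  then have T0: "T \<ge> 0" using k by linarith
  have "bcoef dt k i \<le> T / (dt\<^sup>2 * (eig i)\<^sup>2)" by (rule bcoef_le[OF dt k])
  also have "\<dots> = (T / dt\<^sup>2) * (1 / (eig i)\<^sup>2)" by simp
  also have "\<dots> \<le> (T / dt\<^sup>2) * w i"
  proof (intro mult_left_mono)
    have "1 / (eig i)\<^sup>2 \<le> 1 / eig i" using e by (intro divide_left_mono) (auto simp: power2_eq_square)
    then show "1 / (eig i)\<^sup>2 \<le> w i" using inv_eig_le_w[of i] by linarith
  qed (use T0 in simp)
  finally show "bcoef dt k i \<le> T / dt\<^sup>2 * w i" .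
qed

lemma part2:
  assumes T: "T > 0" and dt: "0 < dt" "dt \<le> T"
  shows "1/2 \<le> C0dist (mu T) (nu dt (nat \<lfloor>T / dt\<rfloor>))"
proof -
  define k where "k = nat \<lfloor>T / dt\<rfloor>"
  have f0: "\<lfloor>T / dt\<rfloor> \<ge> 0" using T dt by simp
  then have "real k = real_of_int \<lfloor>T / dt\<rfloor>" by (simp add: k_def)
  also have "\<dots> \<le> T / dt" by (rule of_int_floor_le)
  finally have "real k \<le> T / dt" .
  then have k: "dt * real k \<le> T" using dt by (simp add: field_simps)
  have q: "\<And>i. acoef T i \<ge> 0" "summable (acoef T)"
    using acoef_pos[OF T] acoef_summable[OF T] by (auto intro: less_imp_le)
  have r: "\<And>i. bcoef dt k i \<ge> 0" "summable (bcoef dt k)"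
    using bcoef_nonneg[OF dt(1)] bcoef_summable[OF dt(1) k] by auto
  define A where "A = 1 - exp (- 2 * pi\<^sup>2 * T)"
  have A: "A > 0" unfolding A_def using T by simp
  obtain n :: nat where n: "32 * T / (A * dt\<^sup>2) < real n" using reals_Archimedean2 by blast
  have "real (Suc n) \<le> (real (Suc n))\<^sup>2"
    using mult_right_mono[of 1 "real (Suc n)" "real (Suc n)"] by (simp add: power2_eq_square)
  then have e: "eig n \<ge> real n" using eig_ge2[of n] by simp
  have ep: "eig n > 0" by (rule eig_pos)
  have big: "32 * T \<le> A * dt\<^sup>2 * eig n"
  proof -
    have "32 * T / (A * dt\<^sup>2) \<le> eig n" using n e by linarith
    moreover have pos: "0 < A * dt\<^sup>2" using A dt by simp
    ultimately have "32 * T \<le> eig n * (A * dt\<^sup>2)" using pos_divide_le_eq[OF pos] by simp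
    then show ?thesis by (simp add: mult_ac)
  qed
  have aA: "A / (2 * eig n) \<le> acoef T n"
  proof -
    have "exp (- 2 * eig n * T) \<le> exp (- 2 * pi\<^sup>2 * T)"
      using eig_ge_pi[of n] T by (simp add: mult_right_mono)
    then show ?thesis unfolding A_def acoef_def using ep by (intro divide_right_mono) auto
  qed
  have "bcoef dt k n \<le> T / (dt\<^sup>2 * (eig n)\<^sup>2)" by (rule bcoef_le[OF dt(1) k])
  also have "\<dots> = (32 * T) / (32 * dt\<^sup>2 * (eig n)\<^sup>2)" by simp
  also have "\<dots> \<le> (A * dt\<^sup>2 * eig n) / (32 * dt\<^sup>2 * (eig n)\<^sup>2)"
    by (rule divide_right_mono[OF big]) simp
  also have "\<dots> = (A / (2 * eig n)) / 16"
    using dt ep by (simp add: power2_eq_square field_simps)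
  also have "\<dots> \<le> acoef T n / 16" using aA by simp
  finally have rn: "bcoef dt k n \<le> acoef T n / 16" .
  have "1/2 \<le> C0dist (gaussH (acoef T)) (gaussH (bcoef dt k))"
    by (rule key[OF q r acoef_pos[OF T] rn])
  moreover have "mu T = gaussH (acoef T)"
    by (simp add: mu_def acoef_def[abs_def])
  moreover have "nu dt k = gaussH (bcoef dt k)"
    unfolding nu_def by (rule arg_cong[where f=gaussH]) (simp add: fun_eq_iff bcoef_def)
  ultimately show ?thesis by (simp add: k_def)
qed

theorem theorem3p1:
  fixes T :: real
  assumes "T > 0"
  shows "limsup (\<lambda>N. ereal (C0dist (mu T) (muN N T))) > 0 \<and>
         Limsup (at_right 0) (\<lambda>dt. ereal (C0dist (mu T) (nu dt (nat \<lfloor>T / dt\<rfloor>)))) > 0"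
proof
  have "ereal (1/2) \<le> limsup (\<lambda>N. ereal (C0dist (mu T) (muN N T)))"
    by (rule le_Limsup) (use part1[OF assms] in auto)
  then show "limsup (\<lambda>N. ereal (C0dist (mu T) (muN N T))) > 0"
    by (rule less_le_trans[rotated]) simp
next
  have ev: "eventually (\<lambda>dt. ereal (1/2) \<le> ereal (C0dist (mu T) (nu dt (nat \<lfloor>T / dt\<rfloor>)))) (at_right 0)"
    unfolding eventually_at_right_field
    by (rule exI[of _ T]) (use assms part2[OF assms] in auto)
  have "ereal (1/2) \<le> Limsup (at_right 0) (\<lambda>dt. ereal (C0dist (mu T) (nu dt (nat \<lfloor>T / dt\<rfloor>))))"
    by (rule le_Limsup[OF _ ev]) simp
  then show "Limsup (at_right 0) (\<lambda>dt. ereal (C0dist (mu T) (nu dt (nat \<lfloor>T / dt\<rfloor>)))) > 0"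
    by (rule less_le_trans[rotated]) simp
qed

end
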